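(* Let $I=(a..c)$ be a conserved interval of $\mathcal{P}$, and let $F$ and $F'$ be two sets of frontiers of $I$. Then $F\cup F'$ is also a set of frontiers of $I$.
   Context: Let $n\geq 2$ and let $\mathcal{P}=\{P_1,\ldots,P_K\}$ be signed permutations of $\{1,\ldots,n\}$: each $P_k$ is an ordering of $1,\ldots,n$ in which each element carries a sign $+$ or $-$. Assume $P_1=(+1,+2,\ldots,+n)$ and that every $P_k$ has first element $+1$ and last element $+n$. For integers $i\leq j$ write $(i..j)=\{i,\ldots,j\}$. A conserved interval of $\mathcal{P}$ is either a singleton, or a set $(a..c)$ with $a<c$ which (ignoring signs) occupies consecutive positions in every $P_k$ and which, in every $P_k$, has either $+a$ at its left end and $+c$ at its right end, or $-c$ at its left end and $-a$ at its right end. For a conserved interval $I=(a..c)$, a set $\{f_1,\ldots,f_k\}$ with $a=f_1<f_2<\cdots<f_k=c$ is a set of frontiers of $I$ if $(f_i..f_j)$ is a conserved interval for all $1\leq i<j\leq k$. *)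

theory Defs
  imports Main
begin

text \<open>A signed element is a pair (sign, value); sign True means +, False means -.
  A signed permutation of 1..n is a list of signed elements whose values are
  exactly 1..n, each occurring once.\<close>

type_synonym selem = "bool \<times> nat"

definition signed_perm :: "nat \<Rightarrow> selem list \<Rightarrow> bool" where
  "signed_perm n p \<longleftrightarrow> distinct (map snd p) \<and> set (map snd p) = {1..n}"

definition valid_family :: "nat \<Rightarrow> selem list list \<Rightarrow> bool" where
  "valid_family n PP \<longleftrightarrow> 2 \<le> n \<and> PP \<noteq> [] \<and>
     hd PP = map (\<lambda>i. (True, i)) [1..<n+1] \<and>
     (\<forall>p\<in>set PP. signed_perm n p \<and> hd p = (True, 1) \<and> last p = (True, n))"

definition conserved :: "nat \<Rightarrow> selem list list \<Rightarrow> nat \<Rightarrow> nat \<Rightarrow> bool" where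
  "conserved n PP a c \<longleftrightarrow>
     (a = c \<and> a \<in> {1..n}) \<or>
     (a < c \<and> (\<forall>p\<in>set PP. \<exists>i j. i < j \<and> j < length p \<and>
        set (map snd (take (j - i + 1) (drop i p))) = {a..c} \<and>
        ((p ! i = (True, a) \<and> p ! j = (True, c)) \<or>
         (p ! i = (False, c) \<and> p ! j = (False, a)))))"

definition frontiers :: "nat \<Rightarrow> selem list list \<Rightarrow> nat \<Rightarrow> nat \<Rightarrow> nat set \<Rightarrow> bool" where
  "frontiers n PP a c F \<longleftrightarrow> finite F \<and> a \<in> F \<and> c \<in> F \<and> F \<subseteq> {a..c} \<and>
     (\<forall>x\<in>F. \<forall>y\<in>F. x < y \<longrightarrow> conserved n PP x y)"

end

theory Submission
  imports Defs
begin

lemma seg_set: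
  assumes ij: "i \<le> j" and "j < length p"
  shows "set (map snd (take (j - i + 1) (drop i p))) = (\<lambda>k. snd (p ! k)) ` {i..j}"
proof -
  have "set (map snd (take (j - i + 1) (drop i p))) = snd ` set (take (j - i + 1) (drop i p))" by simp
  also have "set (take (j - i + 1) (drop i p)) = (\<lambda>k. p ! k) ` {i..j}"
  proof
    show "set (take (j - i + 1) (drop i p)) \<subseteq> (!) p ` {i..j}"
    proof
      fix z assume "z \<in> set (take (j - i + 1) (drop i p))"
      then obtain t where t: "t < length (take (j - i + 1) (drop i p))" "z = take (j - i + 1) (drop i p) ! t"
        by (auto simp: in_set_conv_nth)
      then have "z = p ! (i + t)" "i + t \<in> {i..j}" using assms by auto
      then show "z \<in> (!) p ` {i..j}" by blast
    qed
  next
    show "(!) p ` {i..j} \<subseteq> set (take (j - i + 1) (drop i p))"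
    proof
      fix z assume "z \<in> (!) p ` {i..j}"
      then obtain k where k: "k \<in> {i..j}" "z = p ! k" by blast
      have "take (j - i + 1) (drop i p) ! (k - i) = p ! k" "k - i < length (take (j - i + 1) (drop i p))"
        using k assms by auto
      then show "z \<in> set (take (j - i + 1) (drop i p))" using k by (metis nth_mem)
    qed
  qed
  finally show ?thesis by (simp add: image_image)
qed

lemma inj_q:
  assumes "distinct (map snd p)"
  shows "inj_on (\<lambda>k. snd (p ! k)) {..<length p}"
  using assms by (auto simp: inj_on_def distinct_conv_nth)

lemma overlap:
  fixes p :: "selem list" and f x y g :: nat
  assumes dist: "distinct (map snd p)" and o: "f < x" "x < y" "y < g"
    and a1: "i1 < j1" "j1 < length p" "set (map snd (take (j1 - i1 + 1) (drop i1 p))) = {f..y}"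
      "(p!i1 = (True,f) \<and> p!j1 = (True,y)) \<or> (p!i1 = (False,y) \<and> p!j1 = (False,f))"
    and a2: "i2 < j2" "j2 < length p" "set (map snd (take (j2 - i2 + 1) (drop i2 p))) = {x..g}"
      "(p!i2 = (True,x) \<and> p!j2 = (True,g)) \<or> (p!i2 = (False,g) \<and> p!j2 = (False,x))"
  shows "\<exists>i j. i < j \<and> j < length p \<and> set (map snd (take (j - i + 1) (drop i p))) = {x..y} \<and>
        ((p!i = (True,x) \<and> p!j = (True,y)) \<or> (p!i = (False,y) \<and> p!j = (False,x)))"
proof -
  define q where "q = (\<lambda>k. snd (p ! k))"
  have inj: "inj_on q {..<length p}" using inj_q[OF dist] q_def by simp
  have A: "q ` {i1..j1} = {f..y}" using seg_set[OF _ a1(2), of i1] a1(1) a1(3) q_def by simp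
  have B: "q ` {i2..j2} = {x..g}" using seg_set[OF _ a2(2), of i2] a2(1) a2(3) q_def by simp
  have mem: "k \<in> {i..j}" if "k < length p" "j < length p" "q k \<in> q ` {i..j}" for k i j
  proof -
    from that(3) obtain k' where "k' \<in> {i..j}" "q k = q k'" by blast
    then show ?thesis using inj that by (metis atLeastAtMost_iff inj_onD lessThan_iff le_less_trans)
  qed
  have inter: "q ` ({i1..j1} \<inter> {i2..j2}) = {x..y}"
  proof
    show "q ` ({i1..j1} \<inter> {i2..j2}) \<subseteq> {x..y}"
    proof
      fix v assume "v \<in> q ` ({i1..j1} \<inter> {i2..j2})"
      then obtain k where "k \<in> {i1..j1}" "k \<in> {i2..j2}" "v = q k" by blast
      then have "v \<in> q ` {i1..j1}" "v \<in> q ` {i2..j2}" by auto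
      then show "v \<in> {x..y}" using A B by auto
    qed
  next
    show "{x..y} \<subseteq> q ` ({i1..j1} \<inter> {i2..j2})"
    proof
      fix v assume v: "v \<in> {x..y}"
      then have "v \<in> q ` {i1..j1}" using A o by auto
      then obtain k where k: "k \<in> {i1..j1}" "q k = v" by auto
      have "v \<in> q ` {i2..j2}" using B o v by auto
      have "k < length p" using k a1 by auto
      then have "k \<in> {i2..j2}" using mem[of k j2 i2] k a2(2) \<open>v \<in> q ` {i2..j2}\<close> by blast
      then show "v \<in> q ` ({i1..j1} \<inter> {i2..j2})" using k by auto
    qed
  qed
  have xin1: "x \<in> q ` {i1..j1}" using A o by auto
  then obtain kx where kx: "kx \<in> {i1..j1}" "q kx = x" by auto
  have "kx < length p" using kx a1 by auto
  moreover have "q kx \<in> q ` {i2..j2}" using kx B o by auto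
  ultimately have kx2: "kx \<in> {i2..j2}" using mem[of kx j2 i2] a2(2) by blast
  have yin2: "y \<in> q ` {i2..j2}" using B o by auto
  from a1(4) show ?thesis
  proof
    assume s1: "p!i1 = (True,f) \<and> p!j1 = (True,y)"
    have qi1: "q i1 = f" "q j1 = y" using s1 q_def by auto
    have "i1 \<notin> {i2..j2}"
    proof
      assume "i1 \<in> {i2..j2}"
      then have "q i1 \<in> {x..g}" using B by blast
      then show False using qi1 o by auto
    qed
    then have lt: "i1 < i2" using kx kx2 by auto
    have "j1 \<in> {i2..j2}" using mem[of j1 j2 i2] yin2 qi1 a1 a2 by auto
    then have iv: "{i1..j1} \<inter> {i2..j2} = {i2..j1}" using lt by auto
    have "q i2 \<in> {f..y}" using A lt \<open>j1 \<in> {i2..j2}\<close> by auto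
    then have pi2: "p!i2 = (True,x)" using a2(4) q_def o by auto
    have "i2 \<noteq> j1" using pi2 s1 o by auto
    then have "i2 < j1" using \<open>j1 \<in> {i2..j2}\<close> by auto
    moreover have "set (map snd (take (j1 - i2 + 1) (drop i2 p))) = {x..y}"
      using seg_set[OF _ a1(2), of i2] \<open>i2 < j1\<close> inter iv q_def by simp
    ultimately show ?thesis using a1(2) pi2 s1 by blast
  next
    assume s1: "p!i1 = (False,y) \<and> p!j1 = (False,f)"
    have qi1: "q i1 = y" "q j1 = f" using s1 q_def by auto
    have "j1 \<notin> {i2..j2}"
    proof
      assume "j1 \<in> {i2..j2}"
      then have "q j1 \<in> {x..g}" using B by blast
      then show False using qi1 o by auto
    qed
    then have lt: "j2 < j1" using kx kx2 by auto
    have "i1 \<in> {i2..j2}" using mem[of i1 j2 i1] mem[of i1 j2 i2] yin2 qi1 a1 a2 by auto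
    then have iv: "{i1..j1} \<inter> {i2..j2} = {i1..j2}" using lt by auto
    have "q j2 \<in> {f..y}" using A lt \<open>i1 \<in> {i2..j2}\<close> by auto
    then have pj2: "p!j2 = (False,x)" using a2(4) q_def o by auto
    have "i1 \<noteq> j2" using pj2 s1 o by auto
    then have "i1 < j2" using \<open>i1 \<in> {i2..j2}\<close> by auto
    moreover have "set (map snd (take (j2 - i1 + 1) (drop i1 p))) = {x..y}"
      using seg_set[OF _ a2(2), of i1] \<open>i1 < j2\<close> inter iv q_def by simp
    ultimately show ?thesis using a2(2) pj2 s1 by blast
  qed
qed

lemma cross:
  assumes vf: "valid_family n PP"
    and F: "frontiers n PP a c F" and F': "frontiers n PP a c F'"
    and xy: "x \<in> F" "y \<in> F'" "x < y"
  shows "conserved n PP x y"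
proof -
  define S where "S = {h \<in> F'. h \<le> x}"
  define T where "T = {h \<in> F. y \<le> h}"
  have fin: "finite S" "finite T" using F F' by (auto simp: frontiers_def S_def T_def)
  have ne: "a \<in> S" "c \<in> T" using F F' xy by (auto simp: frontiers_def S_def T_def)
  define f where "f = Max S"
  define g where "g = Min T"
  have fS: "f \<in> S" using fin ne f_def by (metis Max_in empty_iff)
  have gT: "g \<in> T" using fin ne g_def by (metis Min_in empty_iff)
  have fmax: "\<And>h. h \<in> F' \<Longrightarrow> h \<le> x \<Longrightarrow> h \<le> f" using fin f_def S_def by auto
  have gmin: "\<And>h. h \<in> F \<Longrightarrow> y \<le> h \<Longrightarrow> g \<le> h" using fin g_def T_def by auto
  show ?thesis
  proof (cases "f = x")
    case True
    then show ?thesis using fS xy F' by (auto simp: frontiers_def S_def)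
  next
    case fx: False
    show ?thesis
    proof (cases "g = y")
      case True
      then show ?thesis using gT xy F by (auto simp: frontiers_def T_def)
    next
      case gy: False
      have o: "f < x" "y < g" using fx gy fS gT S_def T_def by auto
      have c1: "conserved n PP f y" using F' fS xy o by (auto simp: frontiers_def S_def)
      have c2: "conserved n PP x g" using F gT xy o by (auto simp: frontiers_def T_def)
      show ?thesis unfolding conserved_def
      proof (rule disjI2, intro conjI ballI)
        show "x < y" by fact
        fix p assume p: "p \<in> set PP"
        have dist: "distinct (map snd p)" using vf p by (auto simp: valid_family_def signed_perm_def)
        obtain i1 j1 where a1: "i1 < j1" "j1 < length p" "set (map snd (take (j1 - i1 + 1) (drop i1 p))) = {f..y}"
          "(p!i1 = (True,f) \<and> p!j1 = (True,y)) \<or> (p!i1 = (False,y) \<and> p!j1 = (False,f))"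
          using c1 p o xy unfolding conserved_def by auto
        obtain i2 j2 where a2: "i2 < j2" "j2 < length p" "set (map snd (take (j2 - i2 + 1) (drop i2 p))) = {x..g}"
          "(p!i2 = (True,x) \<and> p!j2 = (True,g)) \<or> (p!i2 = (False,g) \<and> p!j2 = (False,x))"
          using c2 p o xy unfolding conserved_def by auto
        show "\<exists>i j. i < j \<and> j < length p \<and> set (map snd (take (j - i + 1) (drop i p))) = {x..y} \<and>
          ((p!i = (True,x) \<and> p!j = (True,y)) \<or> (p!i = (False,y) \<and> p!j = (False,x)))"
          using overlap[OF dist o(1) xy(3) o(2) a1 a2] .
      qed
    qed
  qed
qed

theorem lemma7:
  fixes n :: nat and PP :: "selem list list" and a c :: nat and F F' :: "nat set"
  assumes "valid_family n PP"
    and "conserved n PP a c"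
    and "frontiers n PP a c F"
    and "frontiers n PP a c F'"
  shows "frontiers n PP a c (F \<union> F')"
proof -
  have "\<forall>x\<in>F \<union> F'. \<forall>y\<in>F \<union> F'. x < y \<longrightarrow> conserved n PP x y"
  proof (intro ballI impI)
    fix x y assume x: "x \<in> F \<union> F'" and y: "y \<in> F \<union> F'" and xy: "x < y"
    show "conserved n PP x y"
    proof (cases "x \<in> F")
      case xF: True
      show ?thesis
      proof (cases "y \<in> F")
        case True then show ?thesis using xF xy assms(3) by (auto simp: frontiers_def)
      next
        case False then show ?thesis using cross[OF assms(1,3,4) xF _ xy] y by auto
      qed
    next
      case xF: False
      then have xF': "x \<in> F'" using x by auto
      show ?thesis
      proof (cases "y \<in> F'")
        case True then show ?thesis using xF' xy assms(4) by (auto simp: frontiers_def)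
      next
        case False then show ?thesis using cross[OF assms(1,4,3) xF' _ xy] y by auto
      qed
    qed
  qed
  then show ?thesis using assms(3,4) by (auto simp: frontiers_def)
qed

end
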